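(* Assume the standing assumptions of the context. Let $\beta>0$. For every $\lambda>0$, $p\in[p_0,q)$, $x\in\mathsf{V}$ and $\xi\in\mathit{\Omega}$, $$\int_{\mathit{\Omega}}\exp\left(\lambda|\omega(x)|^p\right)\pi_x(d\omega|\xi)\le\exp\Big(C(\beta,\lambda,p)+\sum_{y\sim x}\frac{2\beta|\xi(y)|^p}{n(x)n(y)}+\sum_{y\sim x}\mathit{\Gamma}_{xy}(\beta,p)\Big),$$ where $\mathit{\Gamma}_{xy}(\beta,p)=\gamma(\beta,p)[n(x)n(y)]^{r/(p-r)}$, $\gamma(\beta,p)=I_W+4(p-r)\left(\frac{J_W}{2p}\right)^{p/(p-r)}\left(\frac{r}{\beta}\right)^{r/(p-r)}$, and $$C(\beta,\lambda,p)=c_V+\log\int_{\mathbb{R}}\exp\left((\lambda+\beta)|u|^p-a_V|u|^q\right)du-\log\int_{\mathbb{R}}\exp\left(-\beta|u|^p-V(u)\right)du.$$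
   Context: $\mathsf{G}=(\mathsf{V},\mathsf{E})$ is a countable, connected, locally finite undirected graph; $y\sim x$ denotes adjacency, $n(x)$ the degree, $\rho$ the path distance, $o$ a fixed root, $w_\alpha(x)=e^{-\alpha\rho(o,x)}$, $\mathit{\Theta}(\alpha,\theta)=\sum_x\sum_{y\sim x}[n(x)n(y)]^\theta w_\alpha(x)$. Standing assumptions: $\theta>0$ fixed with $\mathit{\Theta}(\alpha,\theta)<\infty$ for some $\alpha>0$; $W:\mathbb{R}^2\to\mathbb{R}$ continuous, symmetric, $|W(u,v)|\le[I_W+J_W(|u|^r+|v|^r)]/2$ with $I_W,J_W,r>0$; $V:\mathbb{R}\to\mathbb{R}$ continuous with $V(u)\ge a_V|u|^q-c_V$ for $a_V,c_V>0$, $q>r+r/\theta$; $p_0=r+r/\theta$. $\mathit{\Omega}=\mathbb{R}^{\mathsf{V}}$. For $x\in\mathsf{V}$ and $\xi\in\mathit{\Omega}$, $\pi_x(\cdot|\xi)$ is the probability measure on $\mathit{\Omega}$ given by $\pi_x(A|\xi)=Z_x(\xi)^{-1}\int_{\mathbb{R}}\mathbb{I}_A(\omega(x)\times\xi_{\mathsf{V}\setminus\{x\}})\exp[-H_x(\omega(x)|\xi)]d\omega(x)$, where $H_x(\omega(x)|\xi)=\sum_{y\sim x}W(\omega(x),\xi(y))+V(\omega(x))$ and $Z_x(\xi)$ is the normalizing constant. *)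

theory Defs
  imports "HOL-Probability.Probability"
begin

definition nbrs :: "('v \<Rightarrow> 'v \<Rightarrow> bool) \<Rightarrow> 'v \<Rightarrow> 'v set" where
  "nbrs adj x = {y. adj x y}"

definition deg :: "('v \<Rightarrow> 'v \<Rightarrow> bool) \<Rightarrow> 'v \<Rightarrow> nat" where
  "deg adj x = card (nbrs adj x)"

definition gdist :: "('v \<Rightarrow> 'v \<Rightarrow> bool) \<Rightarrow> 'v \<Rightarrow> 'v \<Rightarrow> nat" where
  "gdist adj x y = (LEAST k. (adj ^^ k) x y)"

definition wgt :: "('v \<Rightarrow> 'v \<Rightarrow> bool) \<Rightarrow> 'v \<Rightarrow> real \<Rightarrow> 'v \<Rightarrow> real" where
  "wgt adj rt \<alpha> x = exp (- \<alpha> * real (gdist adj rt x))"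

text \<open>the summand of Theta(alpha,theta) at vertex x; Theta < infinity is
  summability of this nonnegative family over all vertices\<close>
definition Theta_term :: "('v \<Rightarrow> 'v \<Rightarrow> bool) \<Rightarrow> 'v \<Rightarrow> real \<Rightarrow> real \<Rightarrow> 'v \<Rightarrow> real" where
  "Theta_term adj rt \<alpha> \<theta> x =
     (\<Sum>y\<in>nbrs adj x. (real (deg adj x * deg adj y)) powr \<theta> * wgt adj rt \<alpha> x)"

definition Theta_finite :: "('v \<Rightarrow> 'v \<Rightarrow> bool) \<Rightarrow> 'v \<Rightarrow> real \<Rightarrow> real \<Rightarrow> bool" where
  "Theta_finite adj rt \<alpha> \<theta> \<longleftrightarrow> (Theta_term adj rt \<alpha> \<theta>) summable_on UNIV"

definition Hx :: "('v \<Rightarrow> 'v \<Rightarrow> bool) \<Rightarrow> (real \<Rightarrow> real \<Rightarrow> real) \<Rightarrow> (real \<Rightarrow> real)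
    \<Rightarrow> 'v \<Rightarrow> ('v \<Rightarrow> real) \<Rightarrow> real \<Rightarrow> real" where
  "Hx adj W V x \<xi> u = (\<Sum>y\<in>nbrs adj x. W u (\<xi> y)) + V u"

definition Zx :: "('v \<Rightarrow> 'v \<Rightarrow> bool) \<Rightarrow> (real \<Rightarrow> real \<Rightarrow> real) \<Rightarrow> (real \<Rightarrow> real)
    \<Rightarrow> 'v \<Rightarrow> ('v \<Rightarrow> real) \<Rightarrow> real" where
  "Zx adj W V x \<xi> = (\<integral>u. exp (- Hx adj W V x \<xi> u) \<partial>lborel)"

definition Omega :: "('v \<Rightarrow> real) measure" where
  "Omega = PiM UNIV (\<lambda>_. borel)"

definition pix :: "('v \<Rightarrow> 'v \<Rightarrow> bool) \<Rightarrow> (real \<Rightarrow> real \<Rightarrow> real) \<Rightarrow> (real \<Rightarrow> real)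
    \<Rightarrow> 'v \<Rightarrow> ('v \<Rightarrow> real) \<Rightarrow> ('v \<Rightarrow> real) measure" where
  "pix adj W V x \<xi> =
     distr (density lborel (\<lambda>u. ennreal (exp (- Hx adj W V x \<xi> u) / Zx adj W V x \<xi>)))
           Omega (\<lambda>u. \<xi>(x := u))"

definition gam :: "real \<Rightarrow> real \<Rightarrow> real \<Rightarrow> real \<Rightarrow> real \<Rightarrow> real" where
  "gam IW JW r \<beta> p = IW + 4 * (p - r) * (JW / (2 * p)) powr (p / (p - r)) * (r / \<beta>) powr (r / (p - r))"

definition Gam :: "('v \<Rightarrow> 'v \<Rightarrow> bool) \<Rightarrow> real \<Rightarrow> real \<Rightarrow> real \<Rightarrow> real \<Rightarrow> real \<Rightarrow> 'v \<Rightarrow> 'v \<Rightarrow> real" where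
  "Gam adj IW JW r \<beta> p x y = gam IW JW r \<beta> p * (real (deg adj x * deg adj y)) powr (r / (p - r))"

definition Cconst :: "(real \<Rightarrow> real) \<Rightarrow> real \<Rightarrow> real \<Rightarrow> real \<Rightarrow> real \<Rightarrow> real \<Rightarrow> real \<Rightarrow> real" where
  "Cconst V aV cV q \<beta> lam p =
     cV + ln (\<integral>u. exp ((lam + \<beta>) * \<bar>u\<bar> powr p - aV * \<bar>u\<bar> powr q) \<partial>lborel)
        - ln (\<integral>u. exp (- \<beta> * \<bar>u\<bar> powr p - V u) \<partial>lborel)"

end

theory Submission
  imports Defs "HOL-Probability.Sinc_Integral"
begin


lemma young_pow:
  fixes r p J e t :: real
  assumes r: "0<r" and rp: "r<p" and J: "J\<ge>0" and e: "e>0" and t: "t\<ge>0"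
  shows "J/2 * t powr r \<le> e * t powr p + (p-r) * (J/(2*p)) powr (p/(p-r)) * (r/e) powr (r/(p-r))"
proof -
  define P where "P = p/r"
  define Q where "Q = p/(p-r)"
  define c where "c = e*p/r"
  have p: "p>0" using r rp by simp
  have c: "c>0" using c_def e p r by simp
  define a where "a = c powr (r/p) * t powr r"
  define b where "b = J/2 * c powr (-r/p)"
  have P1: "P>1" using P_def r rp by simp
  have Q1: "Q>1" unfolding Q_def using r rp by (simp add: less_divide_eq)
  have PQ: "1/P + 1/Q = 1" unfolding P_def Q_def using r rp by (simp add: field_simps)
  have ab: "a*b = J/2 * t powr r"
    using c by (simp add: a_def b_def powr_minus field_simps)
  have aP: "a powr P / P = e * t powr p"
  proof -
    have "a powr P = (c powr (r/p)) powr P * (t powr r) powr P"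
      unfolding a_def by (simp add: powr_mult t)
    also have "\<dots> = c * t powr p"
      using r p c by (simp add: powr_powr P_def)
    finally have "a powr P = c * t powr p" .
    thus ?thesis unfolding P_def c_def using r p by (simp add: field_simps)
  qed
  have bQ: "b powr Q / Q = (p-r) * (J/(2*p)) powr (p/(p-r)) * (r/e) powr (r/(p-r))"
  proof -
    have "b powr Q = (J/2) powr Q * (c powr (-r/p)) powr Q"
      unfolding b_def using J by (subst powr_mult) auto
    also have "(c powr (-r/p)) powr Q = c powr (-r/(p-r))"
      using r rp p by (simp add: powr_powr Q_def field_simps)
    also have "c powr (-r/(p-r)) = (r/e) powr (r/(p-r)) * p powr (-r/(p-r))"
    proof -
      have "c = inverse (r/e) * p" using c_def e r by (simp add: field_simps)
      hence "c powr (-r/(p-r)) = (inverse (r/e)) powr (-r/(p-r)) * p powr (-r/(p-r))"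
        by (simp only: powr_mult)
      also have "(inverse (r/e)) powr (-r/(p-r)) = (r/e) powr (r/(p-r))"
      proof -
        have m: "-r/(p-r) = -(r/(p-r))" by simp
        show ?thesis unfolding m powr_minus inverse_powr by simp
      qed
      finally show ?thesis .
    qed
    finally have bq: "b powr Q = (J/2) powr Q * ((r/e) powr (r/(p-r)) * p powr (-r/(p-r)))" .
    have j: "(J/(2*p)) powr Q = (J/2) powr Q * p powr (-Q)"
    proof -
      have "(J/(2*p)) powr Q = ((J/2) * inverse p) powr Q"
        using p by (simp add: field_simps)
      also have "\<dots> = (J/2) powr Q * (inverse p) powr Q" by (rule powr_mult)
      finally have "(J/(2*p)) powr Q = (J/2) powr Q * (inverse p) powr Q" .
      thus ?thesis by (simp only: inverse_powr powr_minus)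
    qed
    have pq: "p powr (-r/(p-r)) / Q = (p-r) * p powr (-Q)"
    proof -
      have "-r/(p-r) = 1 + (-Q)" using Q_def r rp by (simp add: field_simps)
      hence "p powr (-r/(p-r)) = p powr 1 * p powr (-Q)" by (simp only: powr_add)
      hence "p powr (-r/(p-r)) = p * p powr (-Q)" using p by simp
      moreover have iq: "1/Q = (p-r)/p" unfolding Q_def using p rp by simp
      have gen: "\<And>a X::real. a = p * X \<Longrightarrow> a / Q = (p-r) * X"
      proof -
        fix a X :: real assume "a = p * X"
        hence "a / Q = p * X * (1/Q)" by simp
        also have "\<dots> = (p-r) * X" using iq p by simp
        finally show "a / Q = (p-r) * X" .
      qed
      ultimately show ?thesis using gen by blast
    qed
    have "b powr Q / Q = (J/2) powr Q * (r/e) powr (r/(p-r)) * (p powr (-r/(p-r)) / Q)"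
      unfolding bq by (simp add: ac_simps)
    also have "\<dots> = (J/2) powr Q * (r/e) powr (r/(p-r)) * ((p-r) * p powr (-Q))"
      unfolding pq ..
    also have "\<dots> = (p-r) * ((J/2) powr Q * p powr (-Q)) * (r/e) powr (r/(p-r))"
      by (simp add: ac_simps)
    also have "\<dots> = (p-r) * (J/(2*p)) powr Q * (r/e) powr (r/(p-r))"
      unfolding j ..
    finally show ?thesis unfolding Q_def .
  qed
  have a0: "a\<ge>0" "b\<ge>0" using J by (auto simp: a_def b_def)
  have "a*b \<le> a powr P / P + b powr Q / Q"
    by (rule Youngs_inequality[OF P1 Q1 PQ a0])
  thus ?thesis unfolding ab aP bQ .
qed


lemma poly_exp_bound:
  fixes c q t :: real
  assumes c: "c>0" and q: "q>0" and t: "t\<ge>0"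
  shows "\<exists>M. \<forall>t\<ge>0. 1 + t^2 \<le> M * exp (c * t powr q)"
proof -
  define n :: nat where "n = nat \<lceil>2/q\<rceil> + 1"
  have n1: "n \<ge> 1" unfolding n_def by simp
  have qn: "q * real n \<ge> 2"
  proof -
    have "real n \<ge> 2/q" unfolding n_def by linarith
    thus ?thesis using q by (simp add: field_simps)
  qed
  define M where "M = 2 + (real n / c)^n"
  have "1 + t^2 \<le> M * exp (c * t powr q)" if t: "t \<ge> 0" for t
  proof -
    define y where "y = c * t powr q / real n"
    have y0: "y \<ge> 0" using c t n1 by (simp add: y_def)
    have "exp (c * t powr q) = exp (real n * y)" using n1 by (simp add: y_def)
    also have "\<dots> = exp y ^ n" by (simp add: exp_of_nat_mult)
    finally have e1: "exp (c * t powr q) = exp y ^ n" .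
    have "y ^ n \<le> exp y ^ n"
    proof (rule power_mono)
      show "y \<le> exp y" using exp_ge_add_one_self[of y] by linarith
    qed (use y0 in auto)
    hence ye: "y ^ n \<le> exp (c * t powr q)" using e1 by simp
    have yn: "y ^ n = (c / real n)^n * t powr (q * real n)"
    proof -
      have "y = (c / real n) * t powr q" by (simp add: y_def)
      hence "y ^ n = (c/real n)^n * (t powr q)^n" by (simp only: power_mult_distrib)
      also have "(t powr q)^n = t powr (q * real n)"
        using t by (cases "t = 0") (use n1 in \<open>auto simp: powr_realpow[symmetric] powr_powr\<close>)
      finally show ?thesis .
    qed
    have t2: "t^2 \<le> 1 + t powr (q * real n)"
    proof (cases "t \<le> 1")
      case True
      hence "t^2 \<le> 1" using t by (simp add: power_le_one)
      moreover have "t powr (q * real n) \<ge> 0" by simp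
      ultimately show ?thesis by linarith
    next
      case False
      hence "t^2 = t powr 2" by (subst powr_numeral) auto
      also have "\<dots> \<le> t powr (q * real n)" using False qn by (intro powr_mono) auto
      finally show ?thesis by simp
    qed
    have cn: "(c / real n)^n > 0" using c n1 by simp
    have "t powr (q * real n) \<le> (real n / c)^n * exp (c * t powr q)"
    proof -
      have "(c / real n)^n * t powr (q * real n) \<le> exp (c * t powr q)" using ye yn by simp
      hence h1: "((c / real n)^n * t powr (q * real n)) / (c / real n)^n \<le> exp (c * t powr q) / (c / real n)^n"
        using cn by (intro divide_right_mono) auto
      have h2: "((c / real n)^n * t powr (q * real n)) / (c / real n)^n = t powr (q * real n)"
        using cn by (intro nonzero_mult_div_cancel_left) (metis less_irrefl)
      have "t powr (q * real n) \<le> exp (c * t powr q) / (c / real n)^n"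
        using h1 unfolding h2 .
      also have "\<dots> = (real n / c)^n * exp (c * t powr q)"
      proof -
        have "(real n / c)^n = inverse ((c/real n)^n)"
          by (simp add: power_divide)
        moreover have "exp (c * t powr q) / (c / real n)^n = inverse ((c/real n)^n) * exp (c * t powr q)"
          by (simp only: divide_inverse mult.commute)
        ultimately show ?thesis by (simp only:)
      qed
      finally show ?thesis .
    qed
    moreover have "1 \<le> exp (c * t powr q)" using c t by simp
    moreover have "M * exp (c * t powr q) = 2 * exp (c * t powr q) + (real n / c)^n * exp (c * t powr q)"
      unfolding M_def by (simp only: distrib_right)
    ultimately show ?thesis using t2 by linarith
  qed
  thus ?thesis by blast
qed


lemma integrable_inv_sq: "integrable lborel (\<lambda>u::real. inverse (1 + u^2))"
  using integrable_inverse_1_plus_square unfolding set_integrable_def by simp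

lemma integrable_exp_pq:
  fixes a b p q :: real
  assumes a: "a>0" and b: "b\<ge>0" and p: "0<p" and pq: "p<q"
  shows "integrable lborel (\<lambda>u::real. exp (b * \<bar>u\<bar> powr p - a * \<bar>u\<bar> powr q))"
proof -
  have q: "q > 0" using p pq by simp
  obtain M where M: "\<And>t. t\<ge>0 \<Longrightarrow> 1 + t^2 \<le> M * exp ((a/2) * t powr q)"
    using poly_exp_bound[of "a/2" q 0] a q by auto
  define K1 where "K1 = (q-p) * (2*b/(2*q)) powr (q/(q-p)) * (p/(a/2)) powr (p/(q-p))"
  have bnd: "norm (exp (b * \<bar>u\<bar> powr p - a * \<bar>u\<bar> powr q)) \<le> norm (exp K1 * M * inverse (1 + u^2))" for u :: real
  proof -
    define t where "t = \<bar>u\<bar>"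
    have t: "t \<ge> 0" by (simp add: t_def)
    have y: "2*b/2 * t powr p \<le> a/2 * t powr q + K1"
      unfolding K1_def by (rule young_pow) (use p pq b a t in auto)
    have y2: "b * t powr p \<le> (a * t powr q)/2 + K1"
    proof -
      have "2*b/2 = b" by simp
      moreover have "a/2 * t powr q = (a * t powr q)/2" by simp
      ultimately show ?thesis using y by metis
    qed
    have u2: "u^2 = t^2" by (simp add: t_def)
    have e1: "exp (b * t powr p - a * t powr q) \<le> exp (K1 - (a * t powr q)/2)"
      by (subst exp_le_cancel_iff) (use y2 in linarith)
    have Mp: "1 + t^2 \<le> M * exp ((a/2) * t powr q)" using M t .
    have pos: "1 + t^2 > 0" by (simp add: add_pos_nonneg)
    have "exp (K1 - (a * t powr q)/2) = exp K1 / exp ((a/2) * t powr q)"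
      by (simp add: exp_diff)
    also have "\<dots> \<le> exp K1 * M / (1 + t^2)"
    proof -
      have E: "exp ((a/2) * t powr q) > 0" by simp
      have "exp K1 * (1 + t^2) \<le> exp K1 * (M * exp ((a/2) * t powr q))"
        using Mp by (intro mult_left_mono) auto
      hence "(exp K1 * (1 + t^2)) / (exp ((a/2) * t powr q) * (1 + t^2))
             \<le> (exp K1 * (M * exp ((a/2) * t powr q))) / (exp ((a/2) * t powr q) * (1 + t^2))"
        using E pos by (intro divide_right_mono) auto
      moreover have "(exp K1 * (1 + t^2)) / (exp ((a/2) * t powr q) * (1 + t^2)) = exp K1 / exp ((a/2) * t powr q)"
        using pos by simp
      moreover have "(exp K1 * (M * exp ((a/2) * t powr q))) / (exp ((a/2) * t powr q) * (1 + t^2)) = exp K1 * M / (1 + t^2)"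
        using E by simp
      ultimately show ?thesis by simp
    qed
    also have "\<dots> = exp K1 * M * inverse (1 + u^2)"
      unfolding u2 by (simp only: divide_inverse)
    finally have g: "exp (b * \<bar>u\<bar> powr p - a * \<bar>u\<bar> powr q) \<le> exp K1 * M * inverse (1 + u^2)"
      using e1 unfolding t_def by linarith
    have nn: "exp K1 * M * inverse (1 + u^2) \<ge> 0"
      using g by (meson exp_ge_zero order_trans)
    show ?thesis
      by (simp only: real_norm_def abs_of_nonneg[OF exp_ge_zero] abs_of_nonneg[OF nn] g)
  qed
  have int: "integrable lborel (\<lambda>u::real. exp K1 * M * inverse (1 + u^2))"
    using integrable_inv_sq by (rule integrable_mult_right)
  have meas: "(\<lambda>u::real. exp (b * \<bar>u\<bar> powr p - a * \<bar>u\<bar> powr q)) \<in> borel_measurable lborel"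
    by measurable
  show ?thesis
    by (rule Bochner_Integration.integrable_bound[OF int meas AE_I2[OF bnd]])
qed


lemma integral_pos_lborel:
  fixes f :: "real \<Rightarrow> real"
  assumes f: "integrable lborel f" and pos: "\<And>x. f x > 0"
  shows "integral\<^sup>L lborel f > 0"
proof -
  have nn: "integral\<^sup>L lborel f \<ge> 0"
    using pos by (intro integral_nonneg_AE) (auto intro: less_imp_le)
  moreover have "integral\<^sup>L lborel f \<noteq> 0"
  proof
    assume "integral\<^sup>L lborel f = 0"
    hence "AE x in lborel. f x = 0"
      using integral_nonneg_eq_0_iff_AE[OF f] pos by (auto intro: less_imp_le)
    hence "emeasure lborel {x\<in>space lborel. \<not> f x = 0} = 0" by (rule AE_E2)
    moreover have "\<And>x. f x \<noteq> 0" using pos by (metis less_irrefl)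
    hence "{x\<in>space lborel. \<not> f x = 0} = UNIV" by auto
    ultimately show False by simp
  qed
  ultimately show ?thesis by simp
qed

lemma W_edge:
  fixes W :: "real \<Rightarrow> real \<Rightarrow> real" and IW JW r p \<beta> N u v :: real
  assumes Wb: "\<bar>W u v\<bar> \<le> (IW + JW * (\<bar>u\<bar> powr r + \<bar>v\<bar> powr r)) / 2"
    and IW: "IW \<ge> 0" and JW: "JW \<ge> 0" and r: "0 < r" and rp: "r < p"
    and beta: "\<beta> > 0" and N: "N \<ge> 1"
  shows "\<bar>W u v\<bar> \<le> \<beta> * \<bar>u\<bar> powr p / N + \<beta> * \<bar>v\<bar> powr p / N
            + gam IW JW r \<beta> p * N powr (r / (p - r)) / 2"
proof -
  define E where "E = N powr (r / (p - r))"
  define c0 where "c0 = (p-r) * (JW/(2*p)) powr (p/(p-r)) * (r/\<beta>) powr (r/(p-r))"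
  define c where "c = (p-r) * (JW/(2*p)) powr (p/(p-r)) * (r/(\<beta>/N)) powr (r/(p-r))"
  have N0: "N > 0" using N by simp
  have cc: "c = c0 * E"
  proof -
    have "r/(\<beta>/N) = (r/\<beta>) * N" using N0 by simp
    hence "(r/(\<beta>/N)) powr (r/(p-r)) = (r/\<beta>) powr (r/(p-r)) * N powr (r/(p-r))"
      by (simp only: powr_mult)
    thus ?thesis unfolding c_def c0_def E_def by (simp only: mult.assoc)
  qed
  have yu: "JW/2 * \<bar>u\<bar> powr r \<le> \<beta>/N * \<bar>u\<bar> powr p + c"
    unfolding c_def by (rule young_pow) (use r rp JW beta N0 in auto)
  have yv: "JW/2 * \<bar>v\<bar> powr r \<le> \<beta>/N * \<bar>v\<bar> powr p + c"
    unfolding c_def by (rule young_pow) (use r rp JW beta N0 in auto)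
  have E1: "E \<ge> 1" unfolding E_def using N r rp by (intro ge_one_powr_ge_zero) auto
  have IE: "IW \<le> IW * E" using IW E1 by (simp add: mult_le_cancel_left1)
  have g: "gam IW JW r \<beta> p * N powr (r / (p - r)) / 2 = IW * E / 2 + 2 * (c0 * E)"
  proof -
    have gen: "\<And>A B. (IW + 4*(p-r)*A*B)*E/2 = IW*E/2 + 2*((p-r)*A*B*E)" by (simp add: field_simps)
    show ?thesis unfolding gam_def E_def[symmetric] c0_def by (rule gen)
  qed
  have w: "\<bar>W u v\<bar> \<le> IW/2 + JW/2 * \<bar>u\<bar> powr r + JW/2 * \<bar>v\<bar> powr r"
    using Wb by (simp add: algebra_simps)
  have "\<beta>/N * \<bar>u\<bar> powr p = \<beta> * \<bar>u\<bar> powr p / N" "\<beta>/N * \<bar>v\<bar> powr p = \<beta> * \<bar>v\<bar> powr p / N" by simp_all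
  thus ?thesis unfolding g using w yu yv IE cc by linarith
qed


theorem lemma4p1:
  fixes adj :: "'v::countable \<Rightarrow> 'v \<Rightarrow> bool" and rt :: 'v
    and W :: "real \<Rightarrow> real \<Rightarrow> real" and V :: "real \<Rightarrow> real"
    and \<theta> IW JW r aV cV q p0 \<beta> lam p :: real
    and x :: 'v and \<xi> :: "'v \<Rightarrow> real"
  assumes sym: "\<And>u v. adj u v \<Longrightarrow> adj v u"
    and irrefl: "\<And>u. \<not> adj u u"
    and connected: "\<And>u v. adj\<^sup>*\<^sup>* u v"
    and locfin: "\<And>u. finite (nbrs adj u)"
    and theta_pos: "\<theta> > 0"
    and Theta: "\<exists>\<alpha>>0. Theta_finite adj rt \<alpha> \<theta>"
    and W_cont: "continuous_on UNIV (\<lambda>(u, v). W u v)"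
    and W_sym: "\<And>u v. W u v = W v u"
    and W_bound: "\<And>u v. \<bar>W u v\<bar> \<le> (IW + JW * (\<bar>u\<bar> powr r + \<bar>v\<bar> powr r)) / 2"
    and IW: "IW > 0" and JW: "JW > 0" and r: "r > 0"
    and V_cont: "continuous_on UNIV V"
    and V_bound: "\<And>u. V u \<ge> aV * \<bar>u\<bar> powr q - cV"
    and aV: "aV > 0" and cV: "cV > 0"
    and q: "q > r + r / \<theta>"
    and p0: "p0 = r + r / \<theta>"
    and beta: "\<beta> > 0"
    and lam: "lam > 0"
    and p: "p0 \<le> p" "p < q"
  shows "(\<integral>\<^sup>+ \<omega>. ennreal (exp (lam * \<bar>\<omega> x\<bar> powr p)) \<partial>(pix adj W V x \<xi>))
     \<le> ennreal (exp (Cconst V aV cV q \<beta> lam p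
          + (\<Sum>y\<in>nbrs adj x. 2 * \<beta> * \<bar>\<xi> y\<bar> powr p / real (deg adj x * deg adj y))
          + (\<Sum>y\<in>nbrs adj x. Gam adj IW JW r \<beta> p x y)))"
proof -
  have rdiv: "r / \<theta> > 0" using r theta_pos by simp
  have rp: "r < p" using p p0 rdiv by linarith
  have ppos: "p > 0" using rp r by linarith
  define N where "N y = real (deg adj x * deg adj y)" for y
  define S where "S = (\<Sum>y\<in>nbrs adj x. \<beta> * \<bar>\<xi> y\<bar> powr p / N y + Gam adj IW JW r \<beta> p x y / 2)"
  define H where "H = Hx adj W V x \<xi>"
  define Z where "Z = Zx adj W V x \<xi>"
  have fin: "finite (nbrs adj x)" by (rule locfin)
  have degx: "deg adj x \<ge> 1" if "y \<in> nbrs adj x" for y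
  proof -
    have "card (nbrs adj x) > 0" using fin that by (auto simp: card_gt_0_iff)
    thus ?thesis by (simp add: deg_def)
  qed
  have degy: "deg adj y \<ge> 1" if "y \<in> nbrs adj x" for y
  proof -
    have "x \<in> nbrs adj y" using that sym by (simp add: nbrs_def)
    hence "card (nbrs adj y) > 0" using locfin[of y] by (auto simp: card_gt_0_iff)
    thus ?thesis by (simp add: deg_def)
  qed
  have Nx: "N y \<ge> real (deg adj x)" if "y \<in> nbrs adj x" for y
  proof -
    have "deg adj x * 1 \<le> deg adj x * deg adj y" using degy[OF that] by (intro mult_le_mono2)
    thus ?thesis unfolding N_def by (metis mult_1_right of_nat_le_iff)
  qed
  have N1: "N y \<ge> 1" if "y \<in> nbrs adj x" for y
    using Nx[OF that] degx[OF that] by linarith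
  have edge: "\<bar>W u (\<xi> y)\<bar> \<le> \<beta> * \<bar>u\<bar> powr p / N y + (\<beta> * \<bar>\<xi> y\<bar> powr p / N y + Gam adj IW JW r \<beta> p x y / 2)"
    if "y \<in> nbrs adj x" for u y
  proof -
    have "\<bar>W u (\<xi> y)\<bar> \<le> \<beta> * \<bar>u\<bar> powr p / N y + \<beta> * \<bar>\<xi> y\<bar> powr p / N y
            + gam IW JW r \<beta> p * N y powr (r / (p - r)) / 2"
      by (rule W_edge[OF W_bound]) (use IW JW r rp beta N1[OF that] in auto)
    thus ?thesis unfolding Gam_def N_def by simp
  qed
  have sumu: "(\<Sum>y\<in>nbrs adj x. \<beta> * \<bar>u\<bar> powr p / N y) \<le> \<beta> * \<bar>u\<bar> powr p" for u
  proof (cases "nbrs adj x = {}")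
    case True thus ?thesis using beta by simp
  next
    case False
    then obtain y0 where y0: "y0 \<in> nbrs adj x" by blast
    have dx: "real (deg adj x) > 0" using degx[OF y0] by simp
    have "(\<Sum>y\<in>nbrs adj x. \<beta> * \<bar>u\<bar> powr p / N y) \<le> (\<Sum>y\<in>nbrs adj x. \<beta> * \<bar>u\<bar> powr p / real (deg adj x))"
    proof (rule sum_mono)
      fix y assume y: "y \<in> nbrs adj x"
      show "\<beta> * \<bar>u\<bar> powr p / N y \<le> \<beta> * \<bar>u\<bar> powr p / real (deg adj x)"
        using Nx[OF y] dx beta by (intro divide_left_mono) auto
    qed
    also have "\<dots> = \<beta> * \<bar>u\<bar> powr p" using dx by (simp add: deg_def)
    finally show ?thesis .
  qed
  have sumW: "(\<Sum>y\<in>nbrs adj x. \<bar>W u (\<xi> y)\<bar>) \<le> \<beta> * \<bar>u\<bar> powr p + S" for u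
  proof -
    have "(\<Sum>y\<in>nbrs adj x. \<bar>W u (\<xi> y)\<bar>) \<le> (\<Sum>y\<in>nbrs adj x. \<beta> * \<bar>u\<bar> powr p / N y + (\<beta> * \<bar>\<xi> y\<bar> powr p / N y + Gam adj IW JW r \<beta> p x y / 2))"
      by (rule sum_mono) (rule edge)
    also have "\<dots> = (\<Sum>y\<in>nbrs adj x. \<beta> * \<bar>u\<bar> powr p / N y) + S"
      unfolding S_def by (rule sum.distrib)
    finally show ?thesis using sumu[of u] by linarith
  qed
  have Habs: "\<bar>(\<Sum>y\<in>nbrs adj x. W u (\<xi> y))\<bar> \<le> \<beta> * \<bar>u\<bar> powr p + S" for u
    using sum_abs[of "\<lambda>y. W u (\<xi> y)" "nbrs adj x"] sumW[of u] by linarith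
  have Hup: "- H u \<le> \<beta> * \<bar>u\<bar> powr p + S + cV - aV * \<bar>u\<bar> powr q" for u
    using Habs[of u] V_bound[of u] unfolding H_def Hx_def by linarith
  have Hlow: "- S - \<beta> * \<bar>u\<bar> powr p - V u \<le> - H u" for u
    using Habs[of u] unfolding H_def Hx_def by linarith
  have Wc: "continuous_on UNIV (\<lambda>u. W u c)" for c
  proof -
    have "continuous_on UNIV ((\<lambda>(u, v). W u v) \<circ> (\<lambda>u. (u, c)))"
      by (rule continuous_on_compose) (auto intro!: continuous_intros continuous_on_subset[OF W_cont])
    thus ?thesis by (simp add: o_def)
  qed
  have Hm[measurable]: "H \<in> borel_measurable borel"
    unfolding H_def Hx_def
    by (intro borel_measurable_add borel_measurable_sum borel_measurable_continuous_onI Wc V_cont)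
  have Vm[measurable]: "V \<in> borel_measurable borel"
    by (rule borel_measurable_continuous_onI[OF V_cont])
  define G where "G u = exp ((lam + \<beta>) * \<bar>u\<bar> powr p - aV * \<bar>u\<bar> powr q)" for u
  have intG: "integrable lborel G"
    unfolding G_def by (rule integrable_exp_pq) (use aV lam beta ppos p in auto)
  have intG0: "integrable lborel (\<lambda>u. exp (\<beta> * \<bar>u\<bar> powr p - aV * \<bar>u\<bar> powr q))"
    by (rule integrable_exp_pq) (use aV beta ppos p in auto)
  have intG1: "integrable lborel (\<lambda>u::real. exp (0 * \<bar>u\<bar> powr p - aV * \<bar>u\<bar> powr q))"
    by (rule integrable_exp_pq) (use aV ppos p in auto)
  have intH: "integrable lborel (\<lambda>u. exp (- H u))"
  proof (rule Bochner_Integration.integrable_bound[OF integrable_mult_right[OF intG0, of "exp (S + cV)"]])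
    show "(\<lambda>u. exp (- H u)) \<in> borel_measurable lborel" by measurable
    show "AE u in lborel. norm (exp (- H u)) \<le> norm (exp (S + cV) * exp (\<beta> * \<bar>u\<bar> powr p - aV * \<bar>u\<bar> powr q))"
    proof (rule AE_I2)
      fix u :: real
      have "exp (- H u) \<le> exp (S + cV + (\<beta> * \<bar>u\<bar> powr p - aV * \<bar>u\<bar> powr q))"
        using Hup[of u] by simp
      thus "norm (exp (- H u)) \<le> norm (exp (S + cV) * exp (\<beta> * \<bar>u\<bar> powr p - aV * \<bar>u\<bar> powr q))"
        by (simp add: exp_add)
    qed
  qed
  define F where "F u = exp (- \<beta> * \<bar>u\<bar> powr p - V u)" for u
  have intF: "integrable lborel F"
  proof (rule Bochner_Integration.integrable_bound[OF integrable_mult_right[OF intG1, of "exp cV"]])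
    show "F \<in> borel_measurable lborel" unfolding F_def by measurable
    show "AE u in lborel. norm (F u) \<le> norm (exp cV * exp (0 * \<bar>u\<bar> powr p - aV * \<bar>u\<bar> powr q))"
    proof (rule AE_I2)
      fix u :: real
      have "\<beta> * \<bar>u\<bar> powr p \<ge> 0" using beta by simp
      hence "F u \<le> exp (cV + (0 * \<bar>u\<bar> powr p - aV * \<bar>u\<bar> powr q))"
        unfolding F_def using V_bound[of u] by simp
      moreover have "norm (F u) = F u" unfolding F_def by simp
      moreover have "norm (exp cV * exp (0 * \<bar>u\<bar> powr p - aV * \<bar>u\<bar> powr q)) = exp (cV + (0 * \<bar>u\<bar> powr p - aV * \<bar>u\<bar> powr q))"
        by (simp add: exp_add[symmetric])
      ultimately show "norm (F u) \<le> norm (exp cV * exp (0 * \<bar>u\<bar> powr p - aV * \<bar>u\<bar> powr q))"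
        by simp
    qed
  qed
  define A where "A = integral\<^sup>L lborel G"
  define B where "B = integral\<^sup>L lborel F"
  have Apos: "A > 0" unfolding A_def by (rule integral_pos_lborel[OF intG]) (simp add: G_def)
  have Bpos: "B > 0" unfolding B_def by (rule integral_pos_lborel[OF intF]) (simp add: F_def)
  have ZB: "exp (- S) * B \<le> Z"
  proof -
    have "exp (- S) * B = integral\<^sup>L lborel (\<lambda>u. exp (- S) * F u)" unfolding B_def by simp
    also have "\<dots> \<le> integral\<^sup>L lborel (\<lambda>u. exp (- H u))"
    proof (rule integral_mono[OF integrable_mult_right[OF intF] intH])
      fix u :: real
      have "exp (- S) * F u = exp (- S - \<beta> * \<bar>u\<bar> powr p - V u)"
        unfolding F_def by (simp add: exp_add[symmetric])
      also have "\<dots> \<le> exp (- H u)" using Hlow[of u] by simp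
      finally show "exp (- S) * F u \<le> exp (- H u)" .
    qed
    also have "\<dots> = Z" unfolding Z_def Zx_def H_def ..
    finally show ?thesis .
  qed
  have Zpos: "Z > 0" using ZB Bpos by (smt (verit) exp_gt_zero mult_pos_pos)
  define K where "K = exp (cV + S) / Z"
  have Kpos: "K > 0" unfolding K_def using Zpos by simp
  have LHS: "(\<integral>\<^sup>+ \<omega>. ennreal (exp (lam * \<bar>\<omega> x\<bar> powr p)) \<partial>(pix adj W V x \<xi>))
      = (\<integral>\<^sup>+ u. ennreal (exp (- H u) / Z) * ennreal (exp (lam * \<bar>u\<bar> powr p)) \<partial>lborel)"
  proof -
    have gm0[measurable]: "fun_upd \<xi> x \<in> measurable borel (Pi\<^sub>M UNIV (\<lambda>_. borel))"
    proof -
      have e: "fun_upd \<xi> x = (\<lambda>u i. if i = x then u else \<xi> i)" by (auto simp: fun_eq_iff)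
      have "(\<lambda>u i. if i = x then u else \<xi> i) \<in> measurable borel (Pi\<^sub>M UNIV (\<lambda>_. borel))"
      proof (rule measurable_PiM_single')
        fix i :: 'v
        show "(\<lambda>u. if i = x then u else \<xi> i) \<in> measurable borel borel" by (cases "i = x") auto
      qed auto
      thus ?thesis unfolding e .
    qed
    have gm: "(\<lambda>u. \<xi>(x := u)) \<in> measurable (density lborel (\<lambda>u. ennreal (exp (- H u) / Z))) Omega"
      unfolding Omega_def by measurable
    have "(\<integral>\<^sup>+ \<omega>. ennreal (exp (lam * \<bar>\<omega> x\<bar> powr p)) \<partial>(pix adj W V x \<xi>))
        = (\<integral>\<^sup>+ u. ennreal (exp (lam * \<bar>(\<xi>(x := u)) x\<bar> powr p)) \<partial>density lborel (\<lambda>u. ennreal (exp (- H u) / Z)))"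
      unfolding pix_def H_def[symmetric] Z_def[symmetric]
      by (rule nn_integral_distr[OF gm]) (unfold Omega_def, measurable)
    also have "\<dots> = (\<integral>\<^sup>+ u. ennreal (exp (- H u) / Z) * ennreal (exp (lam * \<bar>u\<bar> powr p)) \<partial>lborel)"
      by (subst nn_integral_density) auto
    finally show ?thesis .
  qed
  have step1: "(\<integral>\<^sup>+ u. ennreal (exp (- H u) / Z) * ennreal (exp (lam * \<bar>u\<bar> powr p)) \<partial>lborel)
      \<le> (\<integral>\<^sup>+ u. ennreal (K * G u) \<partial>lborel)"
  proof (rule nn_integral_mono)
    fix u :: real
    have "exp (- H u) * exp (lam * \<bar>u\<bar> powr p) = exp (- H u + lam * \<bar>u\<bar> powr p)"
      by (simp only: exp_add)
    also have "\<dots> \<le> exp (cV + S + ((lam + \<beta>) * \<bar>u\<bar> powr p - aV * \<bar>u\<bar> powr q))"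
      using Hup[of u] by (simp add: algebra_simps)
    also have "\<dots> = exp (cV + S) * G u" by (simp add: exp_add G_def)
    finally have "exp (- H u) * exp (lam * \<bar>u\<bar> powr p) / Z \<le> exp (cV + S) * G u / Z"
      using Zpos by (intro divide_right_mono) auto
    hence "exp (- H u) / Z * exp (lam * \<bar>u\<bar> powr p) \<le> K * G u"
      unfolding K_def by (simp add: field_simps)
    thus "ennreal (exp (- H u) / Z) * ennreal (exp (lam * \<bar>u\<bar> powr p)) \<le> ennreal (K * G u)"
      using Zpos by (subst ennreal_mult[symmetric]) (auto intro: ennreal_leI)
  qed
  have step2: "(\<integral>\<^sup>+ u. ennreal (K * G u) \<partial>lborel) = ennreal (K * A)"
  proof -
    have "(\<integral>\<^sup>+ u. ennreal (K * G u) \<partial>lborel) = ennreal (integral\<^sup>L lborel (\<lambda>u. K * G u))"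
      by (rule nn_integral_eq_integral[OF integrable_mult_right[OF intG]])
         (use Kpos in \<open>auto simp: G_def\<close>)
    thus ?thesis unfolding A_def by simp
  qed
  have sums: "(\<Sum>y\<in>nbrs adj x. 2 * \<beta> * \<bar>\<xi> y\<bar> powr p / real (deg adj x * deg adj y))
          + (\<Sum>y\<in>nbrs adj x. Gam adj IW JW r \<beta> p x y) = 2 * S"
  proof -
    have "2 * S = (\<Sum>y\<in>nbrs adj x. 2 * (\<beta> * \<bar>\<xi> y\<bar> powr p / N y) + Gam adj IW JW r \<beta> p x y)"
      unfolding S_def sum_distrib_left by (simp add: algebra_simps)
    also have "\<dots> = (\<Sum>y\<in>nbrs adj x. 2 * \<beta> * \<bar>\<xi> y\<bar> powr p / real (deg adj x * deg adj y))
          + (\<Sum>y\<in>nbrs adj x. Gam adj IW JW r \<beta> p x y)"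
      unfolding N_def by (simp add: sum.distrib mult.assoc)
    finally show ?thesis by simp
  qed
  have Cc: "Cconst V aV cV q \<beta> lam p = cV + ln A - ln B"
    unfolding Cconst_def A_def B_def G_def F_def ..
  have final: "K * A \<le> exp (Cconst V aV cV q \<beta> lam p + 2 * S)"
  proof -
    have "K * A = exp cV * exp S * A / Z" unfolding K_def by (simp add: exp_add)
    also have "\<dots> \<le> exp cV * exp S * A / (exp (- S) * B)"
      using ZB Apos Bpos Zpos by (intro divide_left_mono) auto
    also have "\<dots> = exp cV * exp S * exp S * A / B" by (simp add: exp_minus field_simps)
    also have "\<dots> = exp (Cconst V aV cV q \<beta> lam p + 2 * S)"
    proof -
      have e2: "exp (S * 2) = exp S * exp S" by (simp only: mult_2_right exp_add)
      have "exp (cV + ln A - ln B + 2 * S) = exp cV * exp (ln A) / exp (ln B) * exp (2 * S)"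
        by (simp only: exp_add exp_diff)
      also have "\<dots> = exp cV * A / B * (exp S * exp S)"
        using Apos Bpos by (simp only: exp_ln mult.commute[of 2 S] e2)
      also have "\<dots> = exp cV * exp S * exp S * A / B" by simp
      finally show ?thesis unfolding Cc by simp
    qed
    finally show ?thesis .
  qed
  have "(\<integral>\<^sup>+ \<omega>. ennreal (exp (lam * \<bar>\<omega> x\<bar> powr p)) \<partial>(pix adj W V x \<xi>))
      \<le> ennreal (K * A)" unfolding LHS using step1 step2 by simp
  also have "\<dots> \<le> ennreal (exp (Cconst V aV cV q \<beta> lam p + 2 * S))"
    by (rule ennreal_leI[OF final])
  finally show ?thesis unfolding add.assoc sums .
qed

end
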